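(* For every positive integer $N$, there are exactly $\varphi(N+1)$ binary words $\mathfrak{s}$ over $\{\mathsf{A},\mathsf{B}\}$ with $\mathsf{P}(\mathfrak{s}) = N$, where $\varphi$ is Euler's totient function.
   Context: $\mathsf{P}(\mathfrak{s})$ denotes the number of distinct words that are subsequences (not necessarily contiguous) of the word $\mathfrak{s}$, the empty word included. *)

theory Defs
  imports Main "HOL-Library.Sublist" "HOL-Number_Theory.Totient"
begin

datatype letter = A | B

definition num_subseq :: "letter list \<Rightarrow> nat" where
  "num_subseq s = card {w. subseq w s}"

end

theory Submission
  imports Defs
begin

definition Tc :: "letter \<Rightarrow> letter list \<Rightarrow> letter list set" where
  "Tc c s = {w. subseq (w @ [c]) s}"

lemma subseq_single_right: "subseq x2 [c] \<Longrightarrow> x2 = [] \<or> x2 = [c]"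
  by (metis list.exhaust list_emb_Nil subseq_Cons2 subseq_Cons2_neq
    subseq_order.dual_order.antisym)

lemma subseq_snoc_iff:
  "subseq w (s @ [c]) \<longleftrightarrow> subseq w s \<or> (\<exists>v. w = v @ [c] \<and> subseq v s)"
proof
  assume "subseq w (s @ [c])"
  then obtain x1 x2 where "w = x1 @ x2" "subseq x1 s" "subseq x2 [c]"
    by (auto elim: subseq_appendE)
  moreover have "x2 = [] \<or> x2 = [c]" using \<open>subseq x2 [c]\<close>
    by (rule subseq_single_right)
  ultimately show "subseq w s \<or> (\<exists>v. w = v @ [c] \<and> subseq v s)" by auto
next
  assume "subseq w s \<or> (\<exists>v. w = v @ [c] \<and> subseq v s)"
  then show "subseq w (s @ [c])" by (auto intro: subseq_rev_drop_many)
qed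

lemma Tc_same: "Tc c (s @ [c]) = {w. subseq w s}"
proof -
  have "subseq (w @ [c]) (s @ [c]) \<longleftrightarrow> subseq w s" for w
    by simp
  then show ?thesis unfolding Tc_def by blast
qed

lemma Tc_other: "d \<noteq> c \<Longrightarrow> Tc c (s @ [d]) = Tc c s"
  unfolding Tc_def by (auto simp: subseq_snoc_iff intro: subseq_rev_drop_many)

lemma finite_subseqs: "finite {w. subseq w (s :: 'a list)}"
proof -
  have "{w. subseq w s} \<subseteq> {w. set w \<subseteq> set s \<and> length w \<le> length s}"
    by (auto dest: list_emb_length list_emb_set)
  moreover have "finite {w. set w \<subseteq> set s \<and> length w \<le> length s}"
    by (rule finite_lists_length_le) simp
  ultimately show ?thesis by (rule finite_subset)
qed

lemma finite_Tc: "finite (Tc c s)"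
proof -
  have "Tc c s \<subseteq> {w. subseq w s}"
    unfolding Tc_def by (auto intro: subseq_order.order_trans[OF _ _] simp: )
  then show ?thesis using finite_subseqs finite_subset by blast
qed

lemma subseqs_split:
  "{w. subseq w s} = insert [] ((\<lambda>w. w @ [A]) ` Tc A s \<union> (\<lambda>w. w @ [B]) ` Tc B s)"
proof (intro set_eqI iffI)
  fix w assume "w \<in> {w. subseq w s}"
  then show "w \<in> insert [] ((\<lambda>w. w @ [A]) ` Tc A s \<union> (\<lambda>w. w @ [B]) ` Tc B s)"
  proof (cases w rule: rev_cases)
    case (snoc v c)
    then show ?thesis using \<open>w \<in> _\<close> by (cases c) (auto simp: Tc_def)
  qed auto
qed (auto simp: Tc_def)

lemma card_subseqs:
  "num_subseq s = 1 + card (Tc A s) + card (Tc B s)"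
proof -
  have i1: "inj_on (\<lambda>w. w @ [c]) X" for c and X :: "letter list set"
    by (auto intro: inj_onI)
  have "card ((\<lambda>w. w @ [A]) ` Tc A s \<union> (\<lambda>w. w @ [B]) ` Tc B s)
      = card ((\<lambda>w. w @ [A]) ` Tc A s) + card ((\<lambda>w. w @ [B]) ` Tc B s)"
    by (rule card_Un_disjoint) (auto simp: finite_Tc)
  also have "\<dots> = card (Tc A s) + card (Tc B s)"
    using card_image[OF i1] by simp
  finally show ?thesis
    unfolding num_subseq_def subseqs_split
    by (subst card_insert_disjoint) (auto simp: finite_Tc)
qed

fun step :: "nat \<times> nat \<Rightarrow> letter \<Rightarrow> nat \<times> nat" where
  "step (u, v) A = (u + v, v)"
| "step (u, v) B = (u, u + v)"

definition cw :: "letter list \<Rightarrow> nat \<times> nat" where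
  "cw s = foldl step (1, 1) s"

lemma cw_snoc_A: "cw (s @ [A]) = (fst (cw s) + snd (cw s), snd (cw s))"
  unfolding cw_def by (cases "foldl step (1, 1) s") simp

lemma cw_snoc_B: "cw (s @ [B]) = (fst (cw s), fst (cw s) + snd (cw s))"
  unfolding cw_def by (cases "foldl step (1, 1) s") simp

lemma cw_Nil: "cw [] = (1, 1)"
  by (simp add: cw_def)

lemma cw_card: "fst (cw s) = card (Tc A s) + 1 \<and> snd (cw s) = card (Tc B s) + 1"
proof (induction s rule: rev_induct)
  case Nil
  have "Tc c [] = {}" for c by (auto simp: Tc_def)
  then show ?case by (simp add: cw_Nil)
next
  case (snoc c s)
  show ?case
  proof (cases c)
    case A
    then show ?thesis using snoc card_subseqs[of s]
      by (simp add: cw_snoc_A Tc_same Tc_other num_subseq_def)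
  next
    case B
    then show ?thesis using snoc card_subseqs[of s]
      by (simp add: cw_snoc_B Tc_same Tc_other num_subseq_def)
  qed
qed

lemma num_subseq_cw: "num_subseq s + 1 = fst (cw s) + snd (cw s)"
  using cw_card[of s] card_subseqs[of s] by simp

lemma cw_pos: "fst (cw s) \<ge> 1 \<and> snd (cw s) \<ge> 1"
proof (induction s rule: rev_induct)
  case (snoc x xs) then show ?case by (cases x) (auto simp: cw_snoc_A cw_snoc_B)
qed (simp add: cw_Nil)

lemma cw_coprime: "coprime (fst (cw s)) (snd (cw s))"
proof (induction s rule: rev_induct)
  case Nil then show ?case by (simp add: cw_Nil)
next
  case (snoc c s)
  then show ?case
    by (cases c) (auto simp: cw_snoc_A cw_snoc_B coprime_iff_gcd_eq_1)
qed

lemma cw_inj: "cw s = cw t \<Longrightarrow> s = t"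
proof (induction s arbitrary: t rule: rev_induct)
  case Nil
  then show ?case
  proof (cases t rule: rev_cases)
    case (snoc t' c)
    then show ?thesis using Nil cw_pos[of t']
      by (cases c) (auto simp: cw_Nil cw_snoc_A cw_snoc_B)
  qed simp
next
  case (snoc c s)
  show ?case
  proof (cases t rule: rev_cases)
    case Nil
    then show ?thesis using snoc.prems cw_pos[of s]
      by (cases c) (auto simp: cw_Nil cw_snoc_A cw_snoc_B)
  next
    case (snoc t' d)
    then show ?thesis using snoc.prems snoc.IH[of t'] cw_pos[of s] cw_pos[of t']
      by (cases c; cases d) (auto simp: cw_snoc_A cw_snoc_B prod_eq_iff)
  qed
qed

lemma cw_surj:
  "u \<ge> 1 \<Longrightarrow> v \<ge> 1 \<Longrightarrow> coprime u v \<Longrightarrow> \<exists>s. cw s = (u, v)"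
proof (induction "u + v" arbitrary: u v rule: less_induct)
  case less
  consider "u = v" | "u > v" | "u < v" by linarith
  then show ?case
  proof cases
    case 1
    then have "u = 1" using less.prems by simp
    then show ?thesis using 1 cw_Nil by blast
  next
    case 2
    have "coprime (u - v) v" using less.prems 2
      by (simp add: coprime_iff_gcd_eq_1 gcd_diff1_nat)
    moreover have "u - v \<ge> 1" "u - v + v < u + v" using 2 less.prems by auto
    ultimately obtain s where "cw s = (u - v, v)" using less.hyps less.prems by blast
    then have "cw (s @ [A]) = (u, v)" using 2 by (simp add: cw_snoc_A)
    then show ?thesis by blast
  next
    case 3
    have "coprime u (v - u)" using less.prems 3
      by (simp add: coprime_iff_gcd_eq_1 gcd_diff1_nat gcd.commute[of u])
    moreover have "v - u \<ge> 1" "u + (v - u) < u + v" using 3 less.prems by auto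
    ultimately obtain s where "cw s = (u, v - u)" using less.hyps less.prems by blast
    then have "cw (s @ [B]) = (u, v)" using 3 by (simp add: cw_snoc_B)
    then show ?thesis by blast
  qed
qed

theorem proposition1:
  fixes N :: nat
  assumes "N > 0"
  shows "card {s :: letter list. num_subseq s = N} = totient (N + 1)"
proof -
  define P where "P = {(u, v). u \<ge> 1 \<and> v \<ge> 1 \<and> coprime u v \<and> u + v = N + 1}"
  have b1: "bij_betw cw {s :: letter list. num_subseq s = N} P"
  proof (rule bij_betwI')
    show "\<And>x y. x \<in> {s. num_subseq s = N} \<Longrightarrow> y \<in> {s. num_subseq s = N} \<Longrightarrow>
       (cw x = cw y) = (x = y)" using cw_inj by blast
    show "\<And>x. x \<in> {s. num_subseq s = N} \<Longrightarrow> cw x \<in> P"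
      using cw_pos cw_coprime num_subseq_cw unfolding P_def
      by (auto simp: case_prod_beta)
    show "\<exists>x\<in>{s. num_subseq s = N}. y = cw x" if "y \<in> P" for y
    proof -
      obtain u v where y: "y = (u, v)" "u \<ge> 1" "v \<ge> 1" "coprime u v" "u + v = N + 1"
        using \<open>y \<in> P\<close> unfolding P_def by auto
      then obtain s where "cw s = (u, v)" using cw_surj by blast
      then have "num_subseq s = N" using num_subseq_cw[of s] y by simp
      then show ?thesis using \<open>cw s = (u, v)\<close> y by auto
    qed
  qed
  have b2: "bij_betw fst P (totatives (N + 1))"
  proof (rule bij_betw_byWitness[where f' = "\<lambda>u. (u, N + 1 - u)"])
    show "fst ` P \<subseteq> totatives (N + 1)"
    proof
      fix y assume "y \<in> fst ` P"
      then obtain x where "x \<in> P" "y = fst x" by auto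
      from \<open>x \<in> P\<close> obtain u v where x: "x = (u, v)" "u \<ge> 1" "v \<ge> 1" "coprime u v" "u + v = N + 1"
        unfolding P_def by auto
      have "coprime u (u + v)" using x(4) by (simp add: coprime_iff_gcd_eq_1)
      then show "y \<in> totatives (N + 1)" using x \<open>y = fst x\<close> by (auto simp: in_totatives_iff)
    qed
    show "(\<lambda>u. (u, N + 1 - u)) ` totatives (N + 1) \<subseteq> P"
    proof (rule image_subsetI)
      fix u assume u: "u \<in> totatives (N + 1)"
      then have u1: "u \<ge> 1" "u \<le> N + 1" "coprime u (N + 1)" by (auto simp: in_totatives_iff)
      have "u \<noteq> N + 1"
      proof
        assume "u = N + 1"
        then have "coprime (N + 1) (N + 1)" using u1 by simp
        then show False using assms by simp
      qed
      then have "u + (N + 1 - u) = N + 1" "N + 1 - u \<ge> 1" using u1 by auto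
      moreover have "coprime u (N + 1 - u)"
      proof -
        have "gcd (N + 1 - u) u = gcd (N + 1) u" using u1 by (simp add: gcd_diff1_nat)
        then have "gcd u (N + 1 - u) = gcd u (N + 1)" by (simp add: gcd.commute)
        then show ?thesis using u1(3) by (simp add: coprime_iff_gcd_eq_1)
      qed
      ultimately show "(u, N + 1 - u) \<in> P" using u1 unfolding P_def by auto
    qed
    show "\<forall>x\<in>P. (fst x, N + 1 - fst x) = x" unfolding P_def by auto
    show "\<forall>y\<in>totatives (N + 1). fst (y, N + 1 - y) = y" by simp
  qed
  have "card {s :: letter list. num_subseq s = N} = card P"
    using b1 by (rule bij_betw_same_card)
  also have "\<dots> = card (totatives (N + 1))"
    using b2 by (rule bij_betw_same_card)
  finally show ?thesis by (simp add: totient_def)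
qed

end
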